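(* Let $\mathcal{X}\subset\mathbb{R}^n$ be a closed convex set, $P$ a probability distribution on a sample space $\mathcal{S}$, $f:\mathcal{X}\times\mathcal{S}\to\mathbb{R}$ such that $f(\cdot;s)$ is $\rho(s)$-weakly convex for each $s$, and $F(x)=\mathbb{E}_P[f(x;S)]$ with $\mathcal{X}^\star=\arg\min_{x\in\mathcal{X}}F(x)$ nonempty. Suppose $F$ is easy to optimize: for each $x^\star\in\mathcal{X}^\star$ and $P$-almost every $s$, $\inf_{x\in\mathcal{X}}f(x;s)=f(x^\star;s)$. Let $x_k$ be generated by the model-based iteration using a model satisfying (C.i)–(C.iv). Then for any $x^\star\in\mathcal{X}^\star$, $$\|x_{k+1}-x^\star\|_2^2\le(1+\alpha_k\rho(S_k))\|x_k-x^\star\|_2^2-[f(x_k;S_k)-f(x^\star;S_k)]\min\Big\{\alpha_k,\frac{f(x_k;S_k)-f(x^\star;S_k)}{\|f'(x_k;S_k)\|_2^2}\Big\}.$$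
   Context: A function $g$ is $\rho$-weakly convex if $x\mapsto g(x)+\frac{\rho}{2}\|x\|_2^2$ is convex. $\partial$ denotes the Fréchet subdifferential and $f'(x;s)$ an element of $\partial f(x;s)$. A model is a family $f_x(\cdot;s):\mathcal{X}\to\mathbb{R}$ with: (C.i) $y\mapsto f_x(y;s)$ convex and subdifferentiable; (C.ii) $f_x(y;s)\le f(y;s)+\frac{\rho(s)}{2}\|y-x\|_2^2$ for all $y\in\mathcal{X}$; (C.iii) $f_x(x;s)=f(x;s)$ and $\partial_y f_x(y;s)|_{y=x}\subset\partial_x f(x;s)$; (C.iv) $f_x(y;s)\ge\inf_{z\in\mathcal{X}}f(z;s)$. The iteration: $S_1,S_2,\ldots$ i.i.d. from $P$, $x_1\in\mathcal{X}$, stepsizes $\alpha_k>0$, $x_{k+1}=\arg\min_{x\in\mathcal{X}}\{f_{x_k}(x;S_k)+\frac{1}{2\alpha_k}\|x-x_k\|_2^2\}$. *)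

theory Defs
  imports "HOL-Analysis.Analysis" "HOL-Probability.Probability"
begin

definition frechet_subdiff :: "'a::euclidean_space set \<Rightarrow> ('a \<Rightarrow> real) \<Rightarrow> 'a \<Rightarrow> 'a set" where
  "frechet_subdiff X h x = {g. x \<in> X \<and>
     (\<forall>e>0. \<exists>d>0. \<forall>y\<in>X. norm (y - x) < d \<longrightarrow>
         h x + inner g (y - x) - e * norm (y - x) \<le> h y)}"

definition weakly_convex_on :: "'a::euclidean_space set \<Rightarrow> real \<Rightarrow> ('a \<Rightarrow> real) \<Rightarrow> bool" where
  "weakly_convex_on X \<rho> h \<longleftrightarrow> convex_on X (\<lambda>x. h x + \<rho> / 2 * (norm x)\<^sup>2)"

end

theory Submission
  imports Defs
begin


lemma key_arith:
  fixes a u r G D c :: real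
  assumes a: "a > 0" and D: "D \<ge> 0" and u0: "u \<ge> 0" and u1: "u \<ge> D - G * r"
    and r: "r \<ge> 0" and G: "G \<ge> 0"
    and c: "c = (if G = 0 then a else min a (D / G\<^sup>2))"
  shows "2 * a * u + r\<^sup>2 \<ge> D * c"
proof (cases "G = 0")
  case True
  have ca: "c = a" using c True by simp
  have uD: "u \<ge> D" using u1 True by simp
  have "a * D \<le> a * u" using uD a by (intro mult_left_mono) auto
  moreover have "0 \<le> a * D" using a D by simp
  moreover have "0 \<le> r\<^sup>2" by simp
  moreover have "D * c = a * D" using ca by simp
  ultimately show ?thesis by linarith
next
  case False
  hence Gp: "G > 0" using G by simp
  have c': "c = min a (D / G\<^sup>2)" using c False by simp
  have c0: "c \<ge> 0" using c' a D by simp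
  have cle: "c \<le> a" using c' by simp
  have cG0: "c \<le> D / G\<^sup>2" using c' by simp
  have cG: "c * G\<^sup>2 \<le> D" using cG0 Gp by (simp add: pos_le_divide_eq)
  show ?thesis
  proof (cases "G * r \<ge> D")
    case True
    have "D * D \<le> (G*r) * (G*r)" using True D by (intro mult_mono) auto
    hence h1: "D * D \<le> G\<^sup>2 * r\<^sup>2" by (simp add: power2_eq_square mult_ac)
    have h2: "D * (c * G\<^sup>2) \<le> D * D" using cG D by (intro mult_left_mono) auto
    have "(D * c) * G\<^sup>2 \<le> r\<^sup>2 * G\<^sup>2" using h1 h2 by (simp add: mult_ac)
    hence h3: "D * c \<le> r\<^sup>2" using Gp by simp
    have "2 * a * u \<ge> 0" using a u0 by simp
    thus ?thesis using h3 by linarith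
  next
    case False
    have X1a: "a * (D - G*r) \<le> a * u" using u1 a by (intro mult_left_mono) auto
    have X1b: "c * (D - G*r) \<le> a * (D - G*r)" using cle False by (intro mult_right_mono) auto
    have X1: "2 * a * u \<ge> 2 * (c * D) - 2 * (c * G * r)" using X1a X1b by (simp add: algebra_simps)
    have X2: "r\<^sup>2 - 2 * (c * G * r) \<ge> - ((c * G)\<^sup>2)"
    proof -
      have "0 \<le> (r - c*G)\<^sup>2" by simp
      thus ?thesis by (simp add: power2_diff power_mult_distrib mult_ac)
    qed
    have X3: "(c*G)\<^sup>2 \<le> c * D"
    proof -
      have "c * (c * G\<^sup>2) \<le> c * D" using cG c0 by (intro mult_left_mono) auto
      thus ?thesis by (simp add: power_mult_distrib power2_eq_square mult_ac)
    qed
    have X4: "D * c = c * D" by simp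
    show ?thesis using X1 X2 X3 X4 by linarith
  qed
qed

lemma subgrad_global:
  fixes m :: "'a::euclidean_space \<Rightarrow> real"
  assumes X: "convex X" and m: "convex_on X m" and g: "g \<in> frechet_subdiff X m y" and z: "z \<in> X"
  shows "m y + inner g (z - y) \<le> m z"
proof (rule ccontr)
  assume neg: "\<not> ?thesis"
  have y: "y \<in> X" using g by (simp add: frechet_subdiff_def)
  have zy: "z \<noteq> y" using neg by auto
  define \<delta> where "\<delta> = m y + inner g (z - y) - m z"
  have dp: "\<delta> > 0" using neg \<delta>_def by simp
  have nz: "norm (z - y) > 0" using zy by simp
  define e where "e = \<delta> / (2 * norm (z - y))"
  have ep: "e > 0" using dp nz e_def by simp
  obtain d where d: "d > 0" and H: "\<forall>w\<in>X. norm (w - y) < d \<longrightarrow> m y + inner g (w - y) - e * norm (w - y) \<le> m w"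
    using g ep unfolding frechet_subdiff_def by blast
  define t where "t = min (1/2) (d / (2 * norm (z - y)))"
  have t0: "t > 0" using d nz t_def by simp
  have t1: "t \<le> 1" using t_def by simp
  define w where "w = (1 - t) *\<^sub>R y + t *\<^sub>R z"
  have wX: "w \<in> X" using X y z t0 t1 w_def by (simp add: convex_def)
  have wy: "w - y = t *\<^sub>R (z - y)" using w_def by (simp add: algebra_simps)
  have nw: "norm (w - y) = t * norm (z - y)" using wy t0 by simp
  have "t * norm (z - y) \<le> d / 2" using t_def nz by (simp add: min_def field_simps split: if_splits)
  hence "norm (w - y) < d" using nw d by simp
  hence "m y + inner g (w - y) - e * norm (w - y) \<le> m w" using H wX by blast
  hence A: "m y + t * inner g (z - y) - e * (t * norm (z - y)) \<le> m w" unfolding nw unfolding wy by simp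
  have B: "m w \<le> (1 - t) * m y + t * m z" using convex_onD[OF m, of t y z] t0 t1 y z w_def by simp
  have "e * (t * norm (z - y)) = t * (\<delta> / 2)" using e_def nz by (simp add: field_simps)
  moreover have "(1 - t) * m y = m y - t * m y" "t * (inner g (z - y) - \<delta>/2) = t * inner g (z - y) - t * (\<delta>/2)"
    "t * (m z - m y) = t * m z - t * m y" by (simp_all add: algebra_simps)
  ultimately have "t * (inner g (z - y) - \<delta>/2) \<le> t * (m z - m y)" using A B by linarith
  hence "inner g (z - y) - \<delta>/2 \<le> m z - m y" using t0 by simp
  thus False using \<delta>_def dp by linarith
qed

lemma three_point:
  fixes m :: "'a::euclidean_space \<Rightarrow> real"
  assumes X: "convex X" and m: "convex_on X m" and a: "a > 0" and p: "p \<in> X"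
    and opt: "\<forall>z\<in>X. m p + 1 / (2 * a) * (norm (p - y))\<^sup>2 \<le> m z + 1 / (2 * a) * (norm (z - y))\<^sup>2"
    and z: "z \<in> X"
  shows "m p + 1 / (2 * a) * (norm (p - y))\<^sup>2 + 1 / (2 * a) * (norm (z - p))\<^sup>2
         \<le> m z + 1 / (2 * a) * (norm (z - y))\<^sup>2"
proof -
  have main: "0 \<le> m z - m p + (1 / a) * inner (p - y) (z - p)"
  proof (rule ccontr)
    assume neg: "\<not> ?thesis"
    define c where "c = - (m z - m p + (1 / a) * inner (p - y) (z - p))"
    have cp: "c > 0" using neg c_def by simp
    have zp: "z \<noteq> p" using neg by auto
    have nz: "(norm (z - p))\<^sup>2 > 0" using zp by simp
    define t where "t = min 1 (a * c / (norm (z - p))\<^sup>2)"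
    have t0: "t > 0" using a cp nz t_def by simp
    have t1: "t \<le> 1" using t_def by simp
    have tle: "t * (norm (z - p))\<^sup>2 \<le> a * c" using t_def nz by (simp add: min_def field_simps split: if_splits)
    define w where "w = (1 - t) *\<^sub>R p + t *\<^sub>R z"
    have wX: "w \<in> X" using X p z t0 t1 w_def by (simp add: convex_def)
    have wy: "w - y = (p - y) + t *\<^sub>R (z - p)" using w_def by (simp add: algebra_simps)
    have nw: "(norm (w - y))\<^sup>2 = (norm (p - y))\<^sup>2 + 2 * t * inner (p - y) (z - p) + t\<^sup>2 * (norm (z - p))\<^sup>2"
      unfolding wy power2_norm_eq_inner by (simp add: inner_add_left inner_add_right inner_commute power2_eq_square algebra_simps)
    have A: "m p + 1 / (2 * a) * (norm (p - y))\<^sup>2 \<le> m w + 1 / (2 * a) * (norm (w - y))\<^sup>2" using opt wX by blast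
    have B: "m w \<le> (1 - t) * m p + t * m z" using convex_onD[OF m, of t p z] t0 t1 p z w_def by simp
    have "0 \<le> t * (m z - m p) + 1 / (2 * a) * (2 * t * inner (p - y) (z - p) + t\<^sup>2 * (norm (z - p))\<^sup>2)"
      using A B nw by (simp add: algebra_simps)
    hence "0 \<le> t * ((m z - m p) + (1 / a) * inner (p - y) (z - p) + t * (norm (z - p))\<^sup>2 / (2 * a))"
      using a by (simp add: field_simps power2_eq_square)
    hence "0 \<le> (m z - m p) + (1 / a) * inner (p - y) (z - p) + t * (norm (z - p))\<^sup>2 / (2 * a)"
      using t0 by (simp add: zero_le_mult_iff)
    moreover have "t * (norm (z - p))\<^sup>2 / (2 * a) \<le> c / 2" using tle a by (simp add: field_simps)
    ultimately show False using c_def cp by linarith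
  qed
  have gen: "\<And>u v::'a. (norm (u + v))\<^sup>2 = (norm u)\<^sup>2 + 2 * inner v u + (norm v)\<^sup>2"
    by (simp add: power2_norm_eq_inner inner_add_left inner_add_right inner_commute)
  have id: "(norm (z - y))\<^sup>2 = (norm (z - p))\<^sup>2 + 2 * inner (p - y) (z - p) + (norm (p - y))\<^sup>2"
    using gen[of "z - p" "p - y"] by simp
  have "0 \<le> (m z - m p) * (2 * a) + 2 * inner (p - y) (z - p)" using main a
    by (simp add: field_simps)
  hence "0 \<le> (m z - m p) * (2 * a) + (norm (z - y))\<^sup>2 - (norm (z - p))\<^sup>2 - (norm (p - y))\<^sup>2" using id by linarith
  hence "(norm (p - y))\<^sup>2 + (norm (z - p))\<^sup>2 - (norm (z - y))\<^sup>2 \<le> (m z - m p) * (2 * a)" by linarith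
  hence "((norm (p - y))\<^sup>2 + (norm (z - p))\<^sup>2 - (norm (z - y))\<^sup>2) / (2 * a) \<le> m z - m p"
    using a by (simp add: pos_divide_le_eq)
  moreover have "((norm (p - y))\<^sup>2 + (norm (z - p))\<^sup>2 - (norm (z - y))\<^sup>2) / (2 * a)
     = 1 / (2 * a) * (norm (p - y))\<^sup>2 + 1 / (2 * a) * (norm (z - p))\<^sup>2 - 1 / (2 * a) * (norm (z - y))\<^sup>2"
    using a by (simp add: field_simps)
  ultimately show ?thesis by linarith
qed

lemma x_in_X:
  assumes "x1 \<in> X" "\<forall>\<omega>\<in>space M. x 0 \<omega> = x1"
    "\<forall>k. \<forall>\<omega>\<in>space M. x (Suc k) \<omega> \<in> X \<and> Q k \<omega>" "\<omega> \<in> space M"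
  shows "x k \<omega> \<in> X"
  using assms by (cases k) auto


theorem lemma1:
  fixes X :: "'a::euclidean_space set"
    and P :: "'s measure"
    and f :: "'a \<Rightarrow> 's \<Rightarrow> real"
    and \<rho> :: "'s \<Rightarrow> real"
    and model :: "'a \<Rightarrow> 's \<Rightarrow> 'a \<Rightarrow> real"
    and M :: "'w measure"
    and S :: "nat \<Rightarrow> 'w \<Rightarrow> 's"
    and x :: "nat \<Rightarrow> 'w \<Rightarrow> 'a"
    and x1 :: 'a
    and \<alpha> :: "nat \<Rightarrow> real"
    and F :: "'a \<Rightarrow> real"
    and Xstar :: "'a set"
  assumes X_closed: "closed X" and X_convex: "convex X"
    and P_prob: "prob_space P"
    and f_wc: "\<forall>s\<in>space P. weakly_convex_on X (\<rho> s) (\<lambda>y. f y s)"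
    and f_int: "\<forall>y\<in>X. integrable P (\<lambda>s. f y s)"
    and F_def: "\<forall>y. F y = (\<integral>s. f y s \<partial>P)"
    and Xstar_def: "Xstar = {y \<in> X. \<forall>z\<in>X. F y \<le> F z}"
    and Xstar_ne: "Xstar \<noteq> {}"
    and easy: "\<forall>xs\<in>Xstar. AE s in P. (INF z\<in>X. ereal (f z s)) = ereal (f xs s)"
    and Ci: "\<forall>y\<in>X. \<forall>s\<in>space P. convex_on X (model y s) \<and>
               (\<forall>z\<in>X. frechet_subdiff X (model y s) z \<noteq> {})"
    and Cii: "\<forall>y\<in>X. \<forall>s\<in>space P. \<forall>z\<in>X.
               model y s z \<le> f z s + \<rho> s / 2 * (norm (z - y))\<^sup>2"
    and Ciii: "\<forall>y\<in>X. \<forall>s\<in>space P. model y s y = f y s \<and>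
               frechet_subdiff X (model y s) y \<subseteq> frechet_subdiff X (\<lambda>z. f z s) y"
    and Civ: "\<forall>y\<in>X. \<forall>s\<in>space P. \<forall>z\<in>X. (INF w\<in>X. ereal (f w s)) \<le> ereal (model y s z)"
    and M_prob: "prob_space M"
    and S_meas: "\<forall>k. S k \<in> measurable M P"
    and S_distr: "\<forall>k. distr M P (S k) = P"
    and S_indep: "prob_space.indep_vars M (\<lambda>_. P) S UNIV"
    and x1_X: "x1 \<in> X"
    and x_init: "\<forall>\<omega>\<in>space M. x 0 \<omega> = x1"
    and \<alpha>_pos: "\<forall>k. \<alpha> k > 0"
    and x_step: "\<forall>k. \<forall>\<omega>\<in>space M. x (Suc k) \<omega> \<in> X \<and>
               (\<forall>y\<in>X. model (x k \<omega>) (S k \<omega>) (x (Suc k) \<omega>)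
                         + 1 / (2 * \<alpha> k) * (norm (x (Suc k) \<omega> - x k \<omega>))\<^sup>2
                      \<le> model (x k \<omega>) (S k \<omega>) y + 1 / (2 * \<alpha> k) * (norm (y - x k \<omega>))\<^sup>2)"
  shows "\<forall>xs\<in>Xstar. \<forall>k. AE \<omega> in M.
           \<forall>g\<in>frechet_subdiff X (model (x k \<omega>) (S k \<omega>)) (x k \<omega>).
             (norm (x (Suc k) \<omega> - xs))\<^sup>2
               \<le> (1 + \<alpha> k * \<rho> (S k \<omega>)) * (norm (x k \<omega> - xs))\<^sup>2
                 - (f (x k \<omega>) (S k \<omega>) - f xs (S k \<omega>)) *
                   (if g = 0 then \<alpha> k
                    else min (\<alpha> k) ((f (x k \<omega>) (S k \<omega>) - f xs (S k \<omega>)) / (norm g)\<^sup>2))"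
proof (intro ballI allI)
  fix xs k assume xs: "xs \<in> Xstar"
  have xsX: "xs \<in> X" using xs Xstar_def by simp
  have ae1: "AE s in P. (INF z\<in>X. ereal (f z s)) = ereal (f xs s)" using easy xs by blast
  hence "AE s in distr M P (S k). (INF z\<in>X. ereal (f z s)) = ereal (f xs s)" by (subst S_distr[rule_format, of k]) (rule ae1)
  hence ae2: "AE \<omega> in M. (INF z\<in>X. ereal (f z (S k \<omega>))) = ereal (f xs (S k \<omega>))"
    by (rule AE_distrD[OF S_meas[rule_format]])
  moreover have "AE \<omega> in M. \<omega> \<in> space M" by (rule AE_space)
  ultimately show "AE \<omega> in M.
           \<forall>g\<in>frechet_subdiff X (model (x k \<omega>) (S k \<omega>)) (x k \<omega>).
             (norm (x (Suc k) \<omega> - xs))\<^sup>2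
               \<le> (1 + \<alpha> k * \<rho> (S k \<omega>)) * (norm (x k \<omega> - xs))\<^sup>2
                 - (f (x k \<omega>) (S k \<omega>) - f xs (S k \<omega>)) *
                   (if g = 0 then \<alpha> k
                    else min (\<alpha> k) ((f (x k \<omega>) (S k \<omega>) - f xs (S k \<omega>)) / (norm g)\<^sup>2))"
  proof eventually_elim
    case (elim \<omega>)
    note inf_eq = elim(1) and \<omega>M = elim(2)
    show ?case
    proof
      fix g
      define y where "y = x k \<omega>"
      define s where "s = S k \<omega>"
      define p where "p = x (Suc k) \<omega>"
      define mm where "mm = model y s"
      define a where "a = \<alpha> k"
      assume "g \<in> frechet_subdiff X (model (x k \<omega>) (S k \<omega>)) (x k \<omega>)"
      hence g: "g \<in> frechet_subdiff X mm y" unfolding mm_def y_def s_def .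
      have yX: "y \<in> X" unfolding y_def using x_in_X[OF x1_X x_init x_step \<omega>M] .
      have sP: "s \<in> space P" unfolding s_def by (rule measurable_space[OF S_meas[rule_format] \<omega>M])
      have pX: "p \<in> X" and opt: "\<forall>z\<in>X. mm p + 1 / (2 * a) * (norm (p - y))\<^sup>2 \<le> mm z + 1 / (2 * a) * (norm (z - y))\<^sup>2"
        using x_step \<omega>M unfolding p_def mm_def y_def s_def a_def by blast+
      have a0: "a > 0" using \<alpha>_pos a_def by simp
      have cvx: "convex_on X mm" using Ci yX sP mm_def by blast
      have T: "mm p + 1 / (2 * a) * (norm (p - y))\<^sup>2 + 1 / (2 * a) * (norm (xs - p))\<^sup>2
         \<le> mm xs + 1 / (2 * a) * (norm (xs - y))\<^sup>2"
        by (rule three_point[OF X_convex cvx a0 pX opt xsX])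
      have C2: "mm xs \<le> f xs s + \<rho> s / 2 * (norm (xs - y))\<^sup>2" using Cii yX sP xsX mm_def by blast
      have "(INF w\<in>X. ereal (f w s)) \<le> ereal (mm p)" using Civ yX sP pX mm_def by blast
      hence C4: "f xs s \<le> mm p" using inf_eq s_def by simp
      have "(INF w\<in>X. ereal (f w s)) \<le> ereal (f y s)" using yX by (rule INF_lower)
      hence D0: "f xs s \<le> f y s" using inf_eq s_def by simp
      have sg: "mm y + inner g (p - y) \<le> mm p" by (rule subgrad_global[OF X_convex cvx g pX])
      have my: "mm y = f y s" using Ciii yX sP mm_def by blast
      have cs: "- (norm g * norm (p - y)) \<le> inner g (p - y)"
        using norm_cauchy_schwarz[of "-g" "p - y"] by simp
      define c where "c = (if g = 0 then a else min a ((f y s - f xs s) / (norm g)\<^sup>2))"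
      have K: "2 * a * (mm p - f xs s) + (norm (p - y))\<^sup>2 \<ge> (f y s - f xs s) * c"
        by (rule key_arith[where G = "norm g"]) (use a0 D0 C4 sg my cs c_def in auto)
      have npx: "norm (xs - p) = norm (p - xs)" by (rule norm_minus_commute)
      have nyx: "norm (xs - y) = norm (y - xs)" by (rule norm_minus_commute)
      have Tc: "mm p + 1 / (2 * a) * (norm (p - y))\<^sup>2 + 1 / (2 * a) * (norm (p - xs))\<^sup>2
         \<le> mm xs + 1 / (2 * a) * (norm (y - xs))\<^sup>2" using T unfolding npx nyx .
      have T2: "2 * a * (mm p + 1 / (2 * a) * (norm (p - y))\<^sup>2 + 1 / (2 * a) * (norm (p - xs))\<^sup>2)
         \<le> 2 * a * (mm xs + 1 / (2 * a) * (norm (y - xs))\<^sup>2)" using Tc a0 by (intro mult_left_mono) auto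
      have e: "\<And>Q. 2 * a * (1 / (2 * a) * Q) = Q" using a0 by simp
      have T3: "2 * a * mm p + (norm (p - y))\<^sup>2 + (norm (p - xs))\<^sup>2 \<le> 2 * a * mm xs + (norm (y - xs))\<^sup>2"
        using T2 by (simp only: distrib_left e)
      have C2a: "2 * a * mm xs \<le> 2 * a * (f xs s + \<rho> s / 2 * (norm (y - xs))\<^sup>2)"
        using C2 a0 unfolding nyx by (intro mult_left_mono) auto
      have C2b: "2 * a * (f xs s + \<rho> s / 2 * (norm (y - xs))\<^sup>2) = 2 * a * f xs s + a * \<rho> s * (norm (y - xs))\<^sup>2"
        by (simp add: algebra_simps)
      have E1: "(1 + a * \<rho> s) * (norm (y - xs))\<^sup>2 = (norm (y - xs))\<^sup>2 + a * \<rho> s * (norm (y - xs))\<^sup>2"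
        by (simp add: algebra_simps)
      have E2: "2 * a * (mm p - f xs s) = 2 * a * mm p - 2 * a * f xs s" by (simp add: algebra_simps)
      have "(norm (p - xs))\<^sup>2 \<le> (1 + a * \<rho> s) * (norm (y - xs))\<^sup>2 - (f y s - f xs s) * c"
        using T3 C2a C2b K E1 E2 by linarith
      thus "(norm (x (Suc k) \<omega> - xs))\<^sup>2
               \<le> (1 + \<alpha> k * \<rho> (S k \<omega>)) * (norm (x k \<omega> - xs))\<^sup>2
                 - (f (x k \<omega>) (S k \<omega>) - f xs (S k \<omega>)) *
                   (if g = 0 then \<alpha> k
                    else min (\<alpha> k) ((f (x k \<omega>) (S k \<omega>) - f xs (S k \<omega>)) / (norm g)\<^sup>2))"
        unfolding p_def y_def s_def a_def c_def by simp
    qed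
  qed
qed

end
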